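(* Let $\mathbb Q$ be a probability measure on $(\Omega,\mathcal F)$ equivalent to $\mathbb P$, and let $(\mathcal B_n)_{n\in\mathbb N_0}$ be $\sigma$-subfields. Then $\mathcal B_n\to\mathcal B_0$ weakly under $\mathbb P$ if and only if $\mathcal B_n\to\mathcal B_0$ weakly under $\mathbb Q$.
   Context: Let $(\Omega,\mathcal F,\mathbb P)$ be a (not necessarily complete) probability space and $\mathcal N:=\{F\in\mathcal F:\mathbb P(F)=0\}$. A $\sigma$-subfield is a sub-$\sigma$-field $\mathcal A\subset\mathcal F$ with $\mathcal A=\sigma(\mathcal A\cup\mathcal N)$ (this notion is the same for $\mathbb P$ and any $\mathbb Q\sim\mathbb P$). For a probability measure $\mathbb R\sim\mathbb P$ and a $\sigma$-subfield $\mathcal A$, $\mathbb R_{\mathcal A}f:=\mathbb E^{\mathbb R}[f\mid\mathcal A]$. We say $\mathcal B_n\to\mathcal B_0$ weakly under $\mathbb R$ if $\mathbb R_{\mathcal B_n}\mathbb 1_A\to\mathbb 1_A$ in $\mathbb R$-probability for every $A\in\mathcal B_0$. *)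

theory Defs
  imports "HOL-Probability.Probability"
begin

definition sigma_subfield :: "'a measure \<Rightarrow> 'a measure \<Rightarrow> bool" where
  "sigma_subfield M A \<longleftrightarrow> subalgebra M A \<and>
     sets A = sigma_sets (space M) (sets A \<union> null_sets M)"

definition conv_in_prob :: "'a measure \<Rightarrow> (nat \<Rightarrow> 'a \<Rightarrow> real) \<Rightarrow> ('a \<Rightarrow> real) \<Rightarrow> bool" where
  "conv_in_prob R X Y \<longleftrightarrow>
     (\<forall>e>0. (\<lambda>n. measure R {x \<in> space R. \<bar>X n x - Y x\<bar> > e}) \<longlonglongrightarrow> 0)"

definition weak_conv_subfields :: "'a measure \<Rightarrow> (nat \<Rightarrow> 'a measure) \<Rightarrow> bool" where
  "weak_conv_subfields R B \<longleftrightarrow>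
     (\<forall>A \<in> sets (B 0). conv_in_prob R (\<lambda>n. real_cond_exp R (B n) (indicator A)) (indicator A))"

end

theory Submission imports Defs begin
lemma abs_cont_seq:
  assumes P: "prob_space P" and Q: "prob_space Q" and sQ: "sets Q = sets P"
    and nul: "null_sets P \<subseteq> null_sets Q"
    and C: "\<And>n. C n \<in> sets P" and lim: "(\<lambda>n. measure P (C n)) \<longlonglongrightarrow> 0"
  shows "(\<lambda>n. measure Q (C n)) \<longlonglongrightarrow> 0"
proof (rule ccontr)
  interpret P: prob_space P by fact
  interpret Q: prob_space Q by fact
  assume "\<not> ?thesis"
  then obtain e where e: "e > 0" and fr: "\<And>N. \<exists>n\<ge>N. measure Q (C n) \<ge> e"
    unfolding LIMSEQ_def dist_real_def by (auto simp: not_less)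
  have "\<exists>n. measure Q (C n) \<ge> e \<and> measure P (C n) \<le> (1/2)^k" for k :: nat
  proof -
    have "(1/2::real)^k > 0" by simp
    then obtain N where "\<And>n. n \<ge> N \<Longrightarrow> measure P (C n) < (1/2)^k"
      using lim unfolding LIMSEQ_def dist_real_def by force
    moreover obtain n where "n \<ge> N" "measure Q (C n) \<ge> e" using fr by blast
    ultimately show ?thesis by force
  qed
  then obtain nn where nn: "\<And>k. measure Q (C (nn k)) \<ge> e" "\<And>k. measure P (C (nn k)) \<le> (1/2)^k"
    by metis
  define D where "D k = C (nn k)" for k
  have DP: "D k \<in> sets P" for k using C D_def by auto
  have "summable (\<lambda>k. measure P (D k))"
    by (rule summable_comparison_test'[where g="\<lambda>k. (1/2)^k" and N=0])
       (auto simp: D_def nn)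
  then have "limsup D \<in> null_sets P"
    by (intro borel_cantelli_limsup1) (auto simp: DP P.emeasure_eq_measure)
  then have nullQ: "limsup D \<in> null_sets Q" using nul by auto
  define E where "E m = (\<Union>k\<in>{m..}. D k)" for m
  have EQ: "E m \<in> sets Q" for m using DP sQ unfolding E_def by auto
  have dec: "decseq E" unfolding E_def decseq_def by (auto 4 3 intro: order_trans)
  have lsD: "limsup D = (\<Inter>m. E m)" unfolding E_def limsup_INF_SUP by auto
  have "(\<lambda>m. measure Q (E m)) \<longlonglongrightarrow> measure Q (\<Inter>m. E m)"
    by (rule Lim_measure_decseq) (use EQ dec in auto)
  then have "(\<lambda>m. measure Q (E m)) \<longlonglongrightarrow> 0" using nullQ lsD by (simp add: measure_eq_0_null_sets)
  moreover have "measure Q (E m) \<ge> e" for m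
  proof -
    have "measure Q (D m) \<le> measure Q (E m)"
      by (rule Q.finite_measure_mono) (auto simp: E_def EQ[unfolded E_def])
    then show ?thesis using nn(1)[of m] D_def by simp
  qed
  ultimately have "e \<le> 0"
    by (intro LIMSEQ_le_const[of _ 0 e]) auto
  with e show False by simp
qed

lemma key:
  assumes R: "prob_space R" and sub: "\<And>n. subalgebra R (B n)" and A: "A \<in> sets R"
  shows "conv_in_prob R (\<lambda>n. real_cond_exp R (B n) (indicator A)) (indicator A) \<longleftrightarrow>
    (\<exists>An. (\<forall>n. An n \<in> sets (B n)) \<and> (\<lambda>n. measure R ((A - An n) \<union> (An n - A))) \<longlonglongrightarrow> 0)"
proof -
  interpret prob_space R by fact
  have sf: "sigma_finite_subalgebra R (B n)" for n
    by (rule finite_measure_subalgebra_is_sigma_finite)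
       (unfold_locales, rule sub)
  have spB: "space (B n) = space R" and seB: "sets (B n) \<subseteq> sets R" for n
    using sub[of n] unfolding subalgebra_def by auto
  define f where "f n = real_cond_exp R (B n) (indicator A)" for n
  have fB[measurable]: "f n \<in> borel_measurable (B n)" for n unfolding f_def by simp
  have fR[measurable]: "f n \<in> borel_measurable R" for n unfolding f_def by simp
  have [measurable]: "A \<in> sets R" by fact
  show ?thesis unfolding f_def[symmetric]
  proof
    assume cv: "conv_in_prob R f (indicator A)"
    define An where "An n = {x\<in>space R. f n x > 1/2}" for n
    have AnB: "An n \<in> sets (B n)" for n
    proof -
      have "{x\<in>space (B n). f n x > 1/2} \<in> sets (B n)" by measurable
      then show ?thesis unfolding An_def spB .
    qed
    have AnR[measurable]: "An n \<in> sets R" for n using AnB seB by auto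
    have le: "measure R ((A - An n) \<union> (An n - A)) \<le> measure R {x\<in>space R. \<bar>f n x - indicator A x\<bar> > 1/4}" for n
    proof (rule finite_measure_mono)
      show "(A - An n) \<union> (An n - A) \<subseteq> {x\<in>space R. \<bar>f n x - indicator A x\<bar> > 1/4}"
        using sets.sets_into_space[OF A] by (auto simp: An_def indicator_def)
      show "{x\<in>space R. \<bar>f n x - indicator A x\<bar> > 1/4} \<in> sets R" by measurable
    qed
    have lim4: "(\<lambda>n. measure R {x\<in>space R. \<bar>f n x - indicator A x\<bar> > 1/4}) \<longlonglongrightarrow> 0"
      using cv unfolding conv_in_prob_def by (metis (no_types) zero_less_divide_1_iff zero_less_numeral)
    have "(\<lambda>n. measure R ((A - An n) \<union> (An n - A))) \<longlonglongrightarrow> 0"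
      by (rule tendsto_sandwich[OF _ _ tendsto_const lim4]) (use le in \<open>auto intro!: always_eventually\<close>)
    then show "\<exists>An. (\<forall>n. An n \<in> sets (B n)) \<and> (\<lambda>n. measure R ((A - An n) \<union> (An n - A))) \<longlonglongrightarrow> 0"
      using AnB by blast
  next
    assume "\<exists>An. (\<forall>n. An n \<in> sets (B n)) \<and> (\<lambda>n. measure R ((A - An n) \<union> (An n - A))) \<longlonglongrightarrow> 0"
    then obtain An where AnB: "\<And>n. An n \<in> sets (B n)"
      and lim: "(\<lambda>n. measure R ((A - An n) \<union> (An n - A))) \<longlonglongrightarrow> 0" by blast
    have AnR[measurable]: "An n \<in> sets R" for n using AnB seB by auto
    define D where "D n = (A - An n) \<union> (An n - A)" for n
    have DR[measurable]: "D n \<in> sets R" for n unfolding D_def by auto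
    define h where "h n = real_cond_exp R (B n) (indicator (D n))" for n
    have hR[measurable]: "h n \<in> borel_measurable R" for n unfolding h_def by simp
    show "conv_in_prob R f (indicator A)" unfolding conv_in_prob_def
    proof (intro allI impI)
      fix e :: real assume e: "e > 0"
      have bound: "measure R {x\<in>space R. \<bar>f n x - indicator A x\<bar> > e}
          \<le> measure R (D n) + measure R (D n) / e" for n
      proof -
        interpret S: sigma_finite_subalgebra R "B n" by (rule sf)
        have iA: "integrable R (indicator A :: _ \<Rightarrow> real)" by (rule integrable_real_indicator) (auto simp: emeasure_eq_measure)
        have iAn: "integrable R (indicator (An n) :: _ \<Rightarrow> real)" by (rule integrable_real_indicator) (auto simp: emeasure_eq_measure)
        have iD: "integrable R (indicator (D n) :: _ \<Rightarrow> real)" by (rule integrable_real_indicator) (auto simp: emeasure_eq_measure)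
        have iDm: "integrable R (\<lambda>x. (-1::real) * indicator (D n) x)" using iD by simp
        have iDiff: "integrable R (\<lambda>x. indicator A x - indicator (An n) x :: real)"
          using iA iAn by (rule Bochner_Integration.integrable_diff)
        have [measurable]: "(indicator (An n) :: _ \<Rightarrow> real) \<in> borel_measurable (B n)"
          using AnB by measurable
        have a1: "AE x in R. real_cond_exp R (B n) (\<lambda>x. indicator A x - indicator (An n) x) x
              = f n x - real_cond_exp R (B n) (indicator (An n)) x"
          unfolding f_def by (rule S.real_cond_exp_diff[OF iA iAn])
        have a2: "AE x in R. real_cond_exp R (B n) (indicator (An n)) x = indicator (An n) x"
          by (rule S.real_cond_exp_F_meas[OF iAn]) measurable
        have a3: "AE x in R. real_cond_exp R (B n) (\<lambda>x. indicator A x - indicator (An n) x) x \<le> h n x"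
          unfolding h_def
          by (rule S.real_cond_exp_mono[OF _ iDiff iD]) (auto simp: D_def indicator_def)
        have a4: "AE x in R. real_cond_exp R (B n) (\<lambda>x. (-1) * indicator (D n) x) x \<le> real_cond_exp R (B n) (\<lambda>x. indicator A x - indicator (An n) x) x"
          by (rule S.real_cond_exp_mono[OF _ iDm iDiff]) (auto simp: D_def indicator_def)
        have a5: "AE x in R. real_cond_exp R (B n) (\<lambda>x. (-1) * indicator (D n) x) x = (-1) * h n x"
          unfolding h_def by (rule S.real_cond_exp_cmult[OF iD])
        have a6: "AE x in R. 0 \<le> h n x"
          unfolding h_def by (rule S.real_cond_exp_pos) auto
        have "AE x in R. x \<in> {x\<in>space R. \<bar>f n x - indicator A x\<bar> > e} \<longrightarrow>
              x \<in> D n \<union> {x\<in>space R. h n x \<ge> e}"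
          using a1 a2 a3 a4 a5
        proof eventually_elim
          case (elim x)
          show ?case
          proof (intro impI)
            assume x: "x \<in> {x\<in>space R. \<bar>f n x - indicator A x\<bar> > e}"
            show "x \<in> D n \<union> {x\<in>space R. h n x \<ge> e}"
            proof (cases "x \<in> D n")
              case False
              then have "indicator A x = (indicator (An n) x :: real)"
                by (auto simp: D_def indicator_def)
              with elim x show ?thesis by auto
            qed simp
          qed
        qed
        then have "measure R {x\<in>space R. \<bar>f n x - indicator A x\<bar> > e}
             \<le> measure R (D n \<union> {x\<in>space R. h n x \<ge> e})"
          by (rule finite_measure_mono_AE) measurable
        also have "\<dots> \<le> measure R (D n) + measure R {x\<in>space R. h n x \<ge> e}"
          by (rule measure_Un_le) measurable
        also have "measure R {x\<in>space R. h n x \<ge> e} \<le> (\<integral>x. h n x \<partial>R) / e"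
          by (rule integral_Markov_inequality_measure[where A="space R"])
             (use a6 e in \<open>auto simp: h_def intro: S.real_cond_exp_int(1)[OF iD]\<close>)
        also have "(\<integral>x. h n x \<partial>R) = measure R (D n)"
          unfolding h_def S.real_cond_exp_int(2)[OF iD]
          using sets.sets_into_space[OF DR[of n]] by (simp add: Int_absorb2)
        finally show ?thesis by simp
      qed
      have "(\<lambda>n. measure R (D n) + measure R (D n) / e) \<longlonglongrightarrow> 0 + 0 / e"
        using lim unfolding D_def[symmetric] by (intro tendsto_intros) (use e in auto)
      then have limb: "(\<lambda>n. measure R (D n) + measure R (D n) / e) \<longlonglongrightarrow> 0" by simp
      show "(\<lambda>n. measure R {x\<in>space R. \<bar>f n x - indicator A x\<bar> > e}) \<longlonglongrightarrow> 0"
        by (rule tendsto_sandwich[OF _ _ tendsto_const limb]) (use bound in \<open>auto intro!: always_eventually\<close>)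
    qed
  qed
qed

theorem proposition4p3:
  fixes P Q :: "'a measure" and B :: "nat \<Rightarrow> 'a measure"
  assumes "prob_space P" and "prob_space Q"
    and "sets Q = sets P"
    and "null_sets Q = null_sets P"
    and "\<And>n. sigma_subfield P (B n)"
  shows "weak_conv_subfields P B \<longleftrightarrow> weak_conv_subfields Q B"
proof -
  have spQ: "space Q = space P" using assms(3) by (rule sets_eq_imp_space_eq)
  have subP: "subalgebra P (B n)" for n using assms(5)[of n] unfolding sigma_subfield_def by auto
  have subQ: "subalgebra Q (B n)" for n using subP[of n] assms(3) spQ unfolding subalgebra_def by auto
  have eq: "(\<exists>An. (\<forall>n. An n \<in> sets (B n)) \<and> (\<lambda>n. measure P ((A - An n) \<union> (An n - A))) \<longlonglongrightarrow> 0)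
      \<longleftrightarrow> (\<exists>An. (\<forall>n. An n \<in> sets (B n)) \<and> (\<lambda>n. measure Q ((A - An n) \<union> (An n - A))) \<longlonglongrightarrow> 0)"
    if A: "A \<in> sets P" for A
  proof -
    have "(\<lambda>n. measure P ((A - An n) \<union> (An n - A))) \<longlonglongrightarrow> 0 \<longleftrightarrow>
          (\<lambda>n. measure Q ((A - An n) \<union> (An n - A))) \<longlonglongrightarrow> 0"
      if An: "\<forall>n. An n \<in> sets (B n)" for An
    proof -
      have C: "(A - An n) \<union> (An n - A) \<in> sets P" for n
        using An subP[of n] A unfolding subalgebra_def by auto
      show ?thesis
        using abs_cont_seq[OF assms(1,2,3) _ C] abs_cont_seq[OF assms(2,1) _ _ C[unfolded assms(3)[symmetric]]]
          assms(3,4) by auto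
    qed
    then show ?thesis by blast
  qed
  show ?thesis unfolding weak_conv_subfields_def
  proof (intro ball_cong refl)
    fix A assume "A \<in> sets (B 0)"
    then have A: "A \<in> sets P" using subP[of 0] unfolding subalgebra_def by auto
    show "conv_in_prob P (\<lambda>n. real_cond_exp P (B n) (indicator A)) (indicator A) =
          conv_in_prob Q (\<lambda>n. real_cond_exp Q (B n) (indicator A)) (indicator A)"
      using key[OF assms(1) subP A] key[OF assms(2) subQ A[folded assms(3)]] eq[OF A] by simp
  qed
qed

end
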